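(* Let $\mathfrak{S}=(\mathcal{X},\mathsf{S},\gamma,(\Lambda_{a})_{a\in\mathcal{A}})$ be a spectral decomposition system for the Euclidean space $\mathfrak{H}$ with spectral-induced ordering mapping $\tau$, and let $\varphi\colon\mathcal{X}\to[-\infty,+\infty]$. Then: (i) $\varphi$ is $\mathsf{S}$-invariant $\Leftrightarrow$ $\varphi\circ\tau=\varphi$ $\Leftrightarrow$ $\varphi\circ\gamma\circ\Lambda_a=\varphi$ for every $a\in\mathcal{A}$; (ii) if $\varphi$ is $\mathsf{S}$-invariant, then $\operatorname{int}\operatorname{dom}(\varphi\circ\gamma)=\gamma^{-1}(\operatorname{int}\operatorname{dom}\varphi)$.
   Context: A Euclidean space is a finite-dimensional real inner product space; inner products are written $\langle\cdot,\cdot\rangle$ and norms $\|\cdot\|$. Let $\mathfrak{H}$ and $\mathcal{X}$ be Euclidean spaces, let $\mathsf{S}$ be a group acting on $\mathcal{X}$ by linear isometries, let $\gamma\colon\mathfrak{H}\to\mathcal{X}$, and let $(\Lambda_a)_{a\in\mathcal{A}}$ be a family of linear operators from $\mathcal{X}$ to $\mathfrak{H}$. The orbit of $x$ is $\mathsf{S}\cdot x=\{s\cdot x: s\in\mathsf{S}\}$; a map $f$ on $\mathcal{X}$ is $\mathsf{S}$-invariant if $f(s\cdot x)=f(x)$ for all $s,x$. The tuple is a spectral decomposition system for $\mathfrak{H}$ if: [A] every $\Lambda_a$ is an isometry; [B] there exists an $\mathsf{S}$-invariant $\tau\colon\mathcal{X}\to\mathcal{X}$ with $\tau(x)\in\mathsf{S}\cdot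 x$ for all $x$ and $\gamma\circ\Lambda_a=\tau$ for all $a$; [C] for every $X\in\mathfrak{H}$ there is $a$ with $X=\Lambda_a\gamma(X)$; [D] $\langle X,Y\rangle\leq\langle\gamma(X),\gamma(Y)\rangle$ for all $X,Y\in\mathfrak{H}$. The map $\tau$ in [B] is the spectral-induced ordering mapping. $\operatorname{dom}f=\{x: f(x)<+\infty\}$ and $\operatorname{int}$ denotes interior. *)

theory Defs
  imports "HOL-Analysis.Analysis" "HOL-Algebra.Group"
begin

definition linear_isometry_action ::
  "('g, 'm) monoid_scheme \<Rightarrow> ('g \<Rightarrow> 'x::euclidean_space \<Rightarrow> 'x) \<Rightarrow> bool" where
  "linear_isometry_action G act \<longleftrightarrow>
     group G \<and>
     (\<forall>x. act \<one>\<^bsub>G\<^esub> x = x) \<and>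
     (\<forall>g\<in>carrier G. \<forall>h\<in>carrier G. \<forall>x. act (g \<otimes>\<^bsub>G\<^esub> h) x = act g (act h x)) \<and>
     (\<forall>g\<in>carrier G. linear (act g) \<and> (\<forall>x. norm (act g x) = norm x))"

definition orbit :: "('g, 'm) monoid_scheme \<Rightarrow> ('g \<Rightarrow> 'x \<Rightarrow> 'x) \<Rightarrow> 'x \<Rightarrow> 'x set" where
  "orbit G act x = {act s x | s. s \<in> carrier G}"

definition invariant_under :: "('g, 'm) monoid_scheme \<Rightarrow> ('g \<Rightarrow> 'x \<Rightarrow> 'x) \<Rightarrow> ('x \<Rightarrow> 'b) \<Rightarrow> bool" where
  "invariant_under G act f \<longleftrightarrow> (\<forall>s\<in>carrier G. \<forall>x. f (act s x) = f x)"

definition lin_isometry :: "('x::euclidean_space \<Rightarrow> 'h::euclidean_space) \<Rightarrow> bool" where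
  "lin_isometry L \<longleftrightarrow> linear L \<and> (\<forall>x. norm (L x) = norm x)"

definition spectral_decomposition_system ::
  "('g, 'm) monoid_scheme \<Rightarrow> ('g \<Rightarrow> 'x::euclidean_space \<Rightarrow> 'x) \<Rightarrow> ('h::euclidean_space \<Rightarrow> 'x)
   \<Rightarrow> 'a set \<Rightarrow> ('a \<Rightarrow> 'x \<Rightarrow> 'h) \<Rightarrow> ('x \<Rightarrow> 'x) \<Rightarrow> bool" where
  "spectral_decomposition_system G act \<gamma> A \<Lambda> \<tau> \<longleftrightarrow>
     linear_isometry_action G act \<and>
     (\<forall>a\<in>A. lin_isometry (\<Lambda> a)) \<and>
     invariant_under G act \<tau> \<and> (\<forall>x. \<tau> x \<in> orbit G act x) \<and> (\<forall>a\<in>A. \<gamma> \<circ> \<Lambda> a = \<tau>) \<and>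
     (\<forall>X. \<exists>a\<in>A. X = \<Lambda> a (\<gamma> X)) \<and>
     (\<forall>X Y. inner X Y \<le> inner (\<gamma> X) (\<gamma> Y))"

definition edom :: "('x \<Rightarrow> ereal) \<Rightarrow> 'x set" where
  "edom f = {x. f x < \<infinity>}"

end

theory Submission
  imports Defs
begin

lemma gamma_norm:
  assumes "spectral_decomposition_system G act \<gamma> A \<Lambda> \<tau>"
  shows "norm (\<gamma> X) = norm X"
proof -
  from assms obtain a where a: "a \<in> A" "X = \<Lambda> a (\<gamma> X)"
    unfolding spectral_decomposition_system_def by blast
  with assms have "lin_isometry (\<Lambda> a)" unfolding spectral_decomposition_system_def by blast
  then have "norm (\<Lambda> a (\<gamma> X)) = norm (\<gamma> X)" unfolding lin_isometry_def by blast
  with a show ?thesis by simp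
qed

lemma gamma_lip:
  assumes "spectral_decomposition_system G act \<gamma> A \<Lambda> \<tau>"
  shows "dist (\<gamma> X) (\<gamma> Y) \<le> dist X Y"
proof -
  have i: "inner X Y \<le> inner (\<gamma> X) (\<gamma> Y)" using assms unfolding spectral_decomposition_system_def by blast
  have "(norm (\<gamma> X - \<gamma> Y))^2 = (norm (\<gamma> X))^2 + (norm (\<gamma> Y))^2 - 2 * inner (\<gamma> X) (\<gamma> Y)"
    by (simp add: power2_norm_eq_inner inner_diff_left inner_diff_right inner_commute)
  also have "\<dots> \<le> (norm X)^2 + (norm Y)^2 - 2 * inner X Y"
    using i gamma_norm[OF assms] by simp
  also have "\<dots> = (norm (X - Y))^2"
    by (simp add: power2_norm_eq_inner inner_diff_left inner_diff_right inner_commute)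
  finally have "(norm (\<gamma> X - \<gamma> Y))^2 \<le> (norm (X - Y))^2" .
  then have "norm (\<gamma> X - \<gamma> Y) \<le> norm (X - Y)"
    using power2_le_imp_le by fastforce
  then show ?thesis by (simp add: dist_norm)
qed

theorem proposition4p4:
  fixes G :: "('g, 'm) monoid_scheme" and act :: "'g \<Rightarrow> 'x::euclidean_space \<Rightarrow> 'x"
    and \<gamma> :: "'h::euclidean_space \<Rightarrow> 'x" and A :: "'a set" and \<Lambda> :: "'a \<Rightarrow> 'x \<Rightarrow> 'h"
    and \<tau> :: "'x \<Rightarrow> 'x" and \<phi> :: "'x \<Rightarrow> ereal"
  assumes "spectral_decomposition_system G act \<gamma> A \<Lambda> \<tau>"
  shows "(invariant_under G act \<phi> \<longleftrightarrow> \<phi> \<circ> \<tau> = \<phi>)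
       \<and> (\<phi> \<circ> \<tau> = \<phi> \<longleftrightarrow> (\<forall>a\<in>A. \<phi> \<circ> \<gamma> \<circ> \<Lambda> a = \<phi>))
       \<and> (invariant_under G act \<phi> \<longrightarrow> interior (edom (\<phi> \<circ> \<gamma>)) = \<gamma> -` interior (edom \<phi>))"
proof -
  note S = assms[unfolded spectral_decomposition_system_def]
  have tinv: "\<And>s x. s \<in> carrier G \<Longrightarrow> \<tau> (act s x) = \<tau> x" using S unfolding invariant_under_def by blast
  have torb: "\<And>x. \<exists>s\<in>carrier G. \<tau> x = act s x" using S unfolding orbit_def by blast
  have gl: "\<And>a. a \<in> A \<Longrightarrow> \<gamma> \<circ> \<Lambda> a = \<tau>" using S by blast
  have Ane: "A \<noteq> {}" using S by blast
  have iso: "\<And>a. a \<in> A \<Longrightarrow> linear (\<Lambda> a) \<and> (\<forall>x. norm (\<Lambda> a x) = norm x)"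
    using S unfolding lin_isometry_def by blast
  have P1: "invariant_under G act \<phi> \<longleftrightarrow> \<phi> \<circ> \<tau> = \<phi>"
  proof
    assume h: "invariant_under G act \<phi>"
    show "\<phi> \<circ> \<tau> = \<phi>"
    proof
      fix x
      obtain s where "s \<in> carrier G" "\<tau> x = act s x" using torb by blast
      then show "(\<phi> \<circ> \<tau>) x = \<phi> x" using h unfolding invariant_under_def by simp
    qed
  next
    assume h: "\<phi> \<circ> \<tau> = \<phi>"
    show "invariant_under G act \<phi>" unfolding invariant_under_def
    proof (intro ballI allI)
      fix s x assume s: "s \<in> carrier G"
      have "\<phi> (act s x) = \<phi> (\<tau> (act s x))" using h by (metis comp_apply)
      also have "\<dots> = \<phi> (\<tau> x)" using tinv[OF s] by simp
      also have "\<dots> = \<phi> x" using h by (metis comp_apply)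
      finally show "\<phi> (act s x) = \<phi> x" .
    qed
  qed
  have P2: "\<phi> \<circ> \<tau> = \<phi> \<longleftrightarrow> (\<forall>a\<in>A. \<phi> \<circ> \<gamma> \<circ> \<Lambda> a = \<phi>)"
  proof -
    have "\<And>a. a \<in> A \<Longrightarrow> \<phi> \<circ> \<gamma> \<circ> \<Lambda> a = \<phi> \<circ> \<tau>" using gl by (simp add: comp_assoc)
    then show ?thesis using Ane by auto
  qed
  have P3: "interior (edom (\<phi> \<circ> \<gamma>)) = \<gamma> -` interior (edom \<phi>)" if h: "invariant_under G act \<phi>"
  proof
    have pt: "\<And>y. \<phi> (\<tau> y) = \<phi> y" using P1 h by (metis comp_apply)
    show "interior (edom (\<phi> \<circ> \<gamma>)) \<subseteq> \<gamma> -` interior (edom \<phi>)"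
    proof
      fix X assume "X \<in> interior (edom (\<phi> \<circ> \<gamma>))"
      then obtain e where e: "e > 0" "ball X e \<subseteq> edom (\<phi> \<circ> \<gamma>)" by (meson mem_interior)
      obtain a where a: "a \<in> A" "X = \<Lambda> a (\<gamma> X)" using S by blast
      have "ball (\<gamma> X) e \<subseteq> edom \<phi>"
      proof
        fix y assume y: "y \<in> ball (\<gamma> X) e"
        have "\<Lambda> a y - X = \<Lambda> a (y - \<gamma> X)" using a iso[OF a(1)] by (metis linear_diff)
        then have "dist X (\<Lambda> a y) = dist (\<gamma> X) y" using iso[OF a(1)]
          by (metis dist_norm dist_commute)
        then have "\<Lambda> a y \<in> ball X e" using y by simp
        then have "\<phi> (\<gamma> (\<Lambda> a y)) < \<infinity>" using e unfolding edom_def by auto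
        moreover have "\<gamma> (\<Lambda> a y) = \<tau> y" using gl[OF a(1)] by (metis comp_apply)
        ultimately show "y \<in> edom \<phi>" using pt unfolding edom_def by simp
      qed
      then show "X \<in> \<gamma> -` interior (edom \<phi>)" using e(1) by (meson mem_interior vimageI2)
    qed
    show "\<gamma> -` interior (edom \<phi>) \<subseteq> interior (edom (\<phi> \<circ> \<gamma>))"
    proof
      fix X assume "X \<in> \<gamma> -` interior (edom \<phi>)"
      then obtain e where e: "e > 0" "ball (\<gamma> X) e \<subseteq> edom \<phi>" by (meson mem_interior vimageE)
      have "ball X e \<subseteq> edom (\<phi> \<circ> \<gamma>)"
      proof
        fix Y assume "Y \<in> ball X e"
        then have "\<gamma> Y \<in> ball (\<gamma> X) e" using gamma_lip[OF assms, of X Y] by simp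
        then show "Y \<in> edom (\<phi> \<circ> \<gamma>)" using e unfolding edom_def by auto
      qed
      then show "X \<in> interior (edom (\<phi> \<circ> \<gamma>))" using e(1) by (meson mem_interior)
    qed
  qed
  show ?thesis using P1 P2 P3 by blast
qed

end
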